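(* Consider the binary delegated search model described in the context. Let $w_i = y_i - c_i/p_i$ and $z_i = x_i - c_i/p_i$, and fix an ordering of the options in non-increasing order of $w_i$. For a half-infinite interval $X$ of the form $X=(\theta,\infty)$ or $X=[\theta,\infty)$ with $\theta\in\mathbb{R}$, let $M(X)$ be the single-proposal mechanism in which a proposal $\omega_i$ is accepted if and only if $\omega_i$ is feasible and $z_i\in X$. Suppose that under $M(X)$ the agent examines the options $\omega_i$ with $z_i \in X$ in the fixed order (non-increasing $w_i$) and proposes the first one found to be feasible (this is a best response of the agent to $M(X)$). Then there exists such an interval $X$ for which the expected net value of $M(X)$ to the principal (the principal's value $x_i$ of the accepted proposal, or $0$ if none is accepted, minus the total cost of all options examined by the agent) is at least one half of the maximum expected net value the principal could achieve by performing an optimal sequential search herself, without delegation.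
   Context: Binary model: there are $m$ options $\omega_1,\ldots,\omega_m$. Option $\omega_i$ is feasible with probability $p_i>0$, independently of the other options. If feasible it yields the commonly known utility $x_i\ge 0$ to the principal and $y_i$ to the agent; if infeasible it yields $0$ to both. Determining whether $\omega_i$ is feasible requires paying a cost $c_i\ge 0$, and it is assumed that $c_i\le p_i y_i$ for every $i$. In delegated search the agent adaptively chooses options to examine, paying their costs, and then proposes one option. A single-proposal mechanism accepts the proposal if it lies in a specified eligible set and otherwise the outcome is the status quo with value $0$. The agent maximizes the expected $y$-value of the accepted proposal minus his total examination costs. Self-search by the principal: the principal adaptively examines options in any order she chooses (paying their costs), stops at any time, and selects at most one examined feasible option. Her net value is the $x$-value of the selected option minus the total examination costs. *)

theory Defs
  imports Main "HOL-Library.Multiset" Complex_Main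
begin

(* Options are indexed by 0..<m. p, x, y, c :: nat => real. *)

definition wv :: "(nat \<Rightarrow> real) \<Rightarrow> (nat \<Rightarrow> real) \<Rightarrow> (nat \<Rightarrow> real) \<Rightarrow> nat \<Rightarrow> real" where
  "wv p y c i = y i - c i / p i"

definition zv :: "(nat \<Rightarrow> real) \<Rightarrow> (nat \<Rightarrow> real) \<Rightarrow> (nat \<Rightarrow> real) \<Rightarrow> nat \<Rightarrow> real" where
  "zv p x c i = x i - c i / p i"

(* Expected net value to the principal of the single-proposal mechanism with eligible set
   {i. z_i \<in> X}, when the agent examines eligible options in the order given by the list
   and proposes the first feasible one: principal gets x_i of the accepted proposal
   minus the costs of all options examined. *)
fun deleg_val :: "(nat \<Rightarrow> real) \<Rightarrow> (nat \<Rightarrow> real) \<Rightarrow> (nat \<Rightarrow> real) \<Rightarrow> real set \<Rightarrow> nat list \<Rightarrow> real" where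
  "deleg_val p x c X [] = 0"
| "deleg_val p x c X (i # rest) =
     (if zv p x c i \<in> X
      then - c i + p i * x i + (1 - p i) * deleg_val p x c X rest
      else deleg_val p x c X rest)"

(* Adaptive self-search policies as decision trees:
   Stop None: stop, select nothing;  Stop (Some j): stop, select examined feasible option j;
   Exam i t_feas t_infeas: examine option i, continue with t_feas if feasible, else t_infeas. *)
datatype policy = Stop "nat option" | Exam nat policy policy

(* validity w.r.t. set E of already examined options and set F of examined feasible ones *)
fun valid_policy :: "nat \<Rightarrow> policy \<Rightarrow> nat set \<Rightarrow> nat set \<Rightarrow> bool" where
  "valid_policy m (Stop None) E F = True"
| "valid_policy m (Stop (Some j)) E F = (j \<in> F)"
| "valid_policy m (Exam i tf ti) E F =
     (i < m \<and> i \<notin> E \<and> valid_policy m tf (insert i E) (insert i F)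
            \<and> valid_policy m ti (insert i E) F)"

fun policy_val :: "(nat \<Rightarrow> real) \<Rightarrow> (nat \<Rightarrow> real) \<Rightarrow> (nat \<Rightarrow> real) \<Rightarrow> policy \<Rightarrow> real" where
  "policy_val p x c (Stop None) = 0"
| "policy_val p x c (Stop (Some j)) = x j"
| "policy_val p x c (Exam i tf ti) =
     - c i + p i * policy_val p x c tf + (1 - p i) * policy_val p x c ti"

end

theory Submission
  imports Defs
begin

fun Phi :: "(nat \<Rightarrow> real) \<Rightarrow> (nat \<Rightarrow> real) \<Rightarrow> real \<Rightarrow> nat list \<Rightarrow> real" where
  "Phi p zp a [] = a"
| "Phi p zp a (i # L) = p i * Phi p zp (max a (zp i)) L + (1 - p i) * Phi p zp a L"

lemma Phi_ge:
  assumes "\<forall>i\<in>set L. 0 \<le> p i \<and> p i \<le> 1"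
  shows "a \<le> Phi p zp a L"
  using assms
proof (induction L arbitrary: a)
  case Nil then show ?case by simp
next
  case (Cons i L)
  have h1: "a \<le> Phi p zp (max a (zp i)) L"
    using Cons.IH[of "max a (zp i)"] Cons.prems by fastforce
  have h2: "a \<le> Phi p zp a L" using Cons by simp
  have p: "0 \<le> p i" "p i \<le> 1" using Cons.prems by auto
  have "p i * a \<le> p i * Phi p zp (max a (zp i)) L" using h1 p by (simp add: mult_left_mono)
  moreover have "(1 - p i) * a \<le> (1 - p i) * Phi p zp a L" using h2 p by (simp add: mult_left_mono)
  ultimately show ?case by (simp add: algebra_simps)
qed

lemma Phi_lip:
  assumes "\<forall>i\<in>set L. 0 \<le> p i \<and> p i \<le> 1" and "b' \<le> b"
  shows "Phi p zp b' L \<le> Phi p zp b L \<and> Phi p zp b L \<le> Phi p zp b' L + (b - b')"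
  using assms
proof (induction L arbitrary: b b')
  case Nil then show ?case by simp
next
  case (Cons i L)
  have p: "0 \<le> p i" "p i \<le> 1" using Cons.prems by auto
  have A: "Phi p zp (max b' (zp i)) L \<le> Phi p zp (max b (zp i)) L \<and>
        Phi p zp (max b (zp i)) L \<le> Phi p zp (max b' (zp i)) L + (max b (zp i) - max b' (zp i))"
    using Cons.IH[of "max b' (zp i)" "max b (zp i)"] Cons.prems by auto
  have B: "Phi p zp b' L \<le> Phi p zp b L \<and> Phi p zp b L \<le> Phi p zp b' L + (b - b')"
    using Cons.IH[of b' b] Cons.prems by auto
  have C: "max b (zp i) - max b' (zp i) \<le> b - b'" using Cons.prems by auto
  define u1 where "u1 = Phi p zp (max b' (zp i)) L"
  define u2 where "u2 = Phi p zp (max b (zp i)) L"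
  define v1 where "v1 = Phi p zp b' L"
  define v2 where "v2 = Phi p zp b L"
  have a1: "u1 \<le> u2" "u2 \<le> u1 + (b - b')" using A C unfolding u1_def u2_def by auto
  have a2: "v1 \<le> v2" "v2 \<le> v1 + (b - b')" using B unfolding v1_def v2_def by auto
  have "p i * u1 \<le> p i * u2" using a1 p by (simp add: mult_left_mono)
  moreover have "(1 - p i) * v1 \<le> (1 - p i) * v2" using a2 p by (simp add: mult_left_mono)
  moreover have "p i * u2 \<le> p i * (u1 + (b - b'))" using a1 p by (simp add: mult_left_mono)
  moreover have "(1 - p i) * v2 \<le> (1 - p i) * (v1 + (b - b'))" using a2 p by (simp add: mult_left_mono)
  ultimately show ?case unfolding u1_def u2_def v1_def v2_def
    by (simp add: algebra_simps) 
qed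

lemma Phi_swap: "Phi p zp a (i # j # L) = Phi p zp a (j # i # L)"
proof -
  have "max (max a (zp i)) (zp j) = max (max a (zp j)) (zp i)" by (simp add: max.commute max.left_commute)
  then show ?thesis by (simp add: algebra_simps)
qed

lemma Phi_remove: "i \<in> set L \<Longrightarrow> Phi p zp a L = Phi p zp a (i # remove1 i L)"
proof (induction L arbitrary: a)
  case Nil then show ?case by simp
next
  case (Cons j L)
  show ?case
  proof (cases "j = i")
    case True then show ?thesis by simp
  next
    case False
    then have iL: "i \<in> set L" using Cons.prems by auto
    have "Phi p zp a (j # L) = Phi p zp a (j # i # remove1 i L)"
      using Cons.IH[OF iL, of "max a (zp j)"] Cons.IH[OF iL, of a] by simp
    also have "\<dots> = Phi p zp a (i # j # remove1 i L)" by (rule Phi_swap)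
    finally show ?thesis using False by simp
  qed
qed

lemma policy_bound:
  fixes p x c :: "nat \<Rightarrow> real"
  assumes p_pos: "\<forall>i<m. 0 < p i \<and> p i \<le> 1"
    and x_nonneg: "\<forall>i<m. 0 \<le> x i"
    and c_nonneg: "\<forall>i<m. 0 \<le> c i"
  shows "valid_policy m t E F \<Longrightarrow> (\<forall>j\<in>F. x j \<le> a) \<Longrightarrow> 0 \<le> a \<Longrightarrow> distinct L
     \<Longrightarrow> set L = {..<m} - E
     \<Longrightarrow> policy_val p x c t \<le> Phi p (\<lambda>i. max (zv p x c i) 0) a L"
proof (induction t arbitrary: E F a L)
  case (Stop oo)
  have pr: "\<forall>i\<in>set L. 0 \<le> p i \<and> p i \<le> 1" using Stop p_pos by auto
  have "a \<le> Phi p (\<lambda>i. max (zv p x c i) 0) a L" by (rule Phi_ge[OF pr])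
  then show ?case using Stop by (cases oo) auto
next
  case (Exam i tf ti)
  let ?zp = "\<lambda>i. max (zv p x c i) 0"
  have im: "i < m" "i \<notin> E" using Exam.prems by auto
  then have iL: "i \<in> set L" using Exam.prems by auto
  define L' where "L' = remove1 i L"
  have dL': "distinct L'" using Exam.prems unfolding L'_def by simp
  have sL': "set L' = {..<m} - insert i E" using Exam.prems unfolding L'_def by auto
  have pr: "\<forall>j\<in>set L'. 0 \<le> p j \<and> p j \<le> 1" using sL' p_pos by auto
  have pi: "0 < p i" "p i \<le> 1" using p_pos im by auto
  have xi: "0 \<le> x i" "0 \<le> c i" using x_nonneg c_nonneg im by auto
  have eq: "Phi p ?zp a L = p i * Phi p ?zp (max a (?zp i)) L' + (1 - p i) * Phi p ?zp a L'"
    using Phi_remove[OF iL] unfolding L'_def by simp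
  have H1: "policy_val p x c tf \<le> Phi p ?zp (max a (x i)) L'"
  proof -
    have "\<forall>j\<in>F. x j \<le> max a (x i)" "0 \<le> max a (x i)" using Exam.prems by auto
    then show ?thesis using Exam.IH(1)[of "insert i E" "insert i F" "max a (x i)" L'] Exam.prems dL' sL' by auto
  qed
  have H2: "policy_val p x c ti \<le> Phi p ?zp a L'"
    using Exam.IH(2)[of "insert i E" F a L'] Exam.prems dL' sL' by auto
  have zx: "zv p x c i \<le> x i" using pi xi unfolding zv_def by simp
  have mm: "max a (?zp i) \<le> max a (x i)" using zx xi by auto
  have lip: "Phi p ?zp (max a (x i)) L' \<le> Phi p ?zp (max a (?zp i)) L' + (max a (x i) - max a (?zp i))"
    using Phi_lip[OF pr mm] by auto
  have dif: "max a (x i) - max a (?zp i) \<le> x i - ?zp i" using zx xi by auto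
  have pz: "p i * (x i - ?zp i) \<le> c i"
  proof (cases "zv p x c i \<ge> 0")
    case True
    then have "p i * (x i - ?zp i) = p i * (c i / p i)" unfolding zv_def by simp
    also have "\<dots> = c i" using pi by simp
    finally show ?thesis by simp
  next
    case False
    then have "x i < c i / p i" unfolding zv_def by simp
    then have "p i * x i < c i" using pi by (simp add: field_simps)
    then show ?thesis using False by simp
  qed
  define U where "U = Phi p ?zp (max a (x i)) L'"
  define V where "V = Phi p ?zp (max a (?zp i)) L'"
  have "U \<le> V + (x i - ?zp i)" using lip dif unfolding U_def V_def by linarith
  then have "p i * U \<le> p i * (V + (x i - ?zp i))" using pi by (simp add: mult_left_mono)
  then have k: "p i * U \<le> p i * V + c i" using pz by (simp add: algebra_simps)
  have k1: "p i * policy_val p x c tf \<le> p i * U" using H1 pi unfolding U_def by (simp add: mult_left_mono)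
  have k2: "(1 - p i) * policy_val p x c ti \<le> (1 - p i) * Phi p ?zp a L'" using H2 pi by (simp add: mult_left_mono)
  show ?case using eq k k1 k2 unfolding V_def by simp
qed

fun qf :: "(nat \<Rightarrow> real) \<Rightarrow> (nat \<Rightarrow> real) \<Rightarrow> (nat \<Rightarrow> real) \<Rightarrow> real set \<Rightarrow> nat list \<Rightarrow> real" where
  "qf p x c X [] = 1"
| "qf p x c X (i # L) = (if zv p x c i \<in> X then (1 - p i) * qf p x c X L else qf p x c X L)"

fun Sf :: "(nat \<Rightarrow> real) \<Rightarrow> (nat \<Rightarrow> real) \<Rightarrow> real \<Rightarrow> nat list \<Rightarrow> real" where
  "Sf p zp t [] = 0"
| "Sf p zp t (i # L) = p i * max (zp i - t) 0 + Sf p zp t L"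

lemma qf_bounds:
  assumes "\<forall>i\<in>set L. 0 \<le> p i \<and> p i \<le> 1"
  shows "0 \<le> qf p x c X L \<and> qf p x c X L \<le> 1"
  using assms
proof (induction L)
  case Nil then show ?case by simp
next
  case (Cons i L)
  then have "0 \<le> 1 - p i" "1 - p i \<le> 1" "0 \<le> qf p x c X L" "qf p x c X L \<le> 1" by auto
  then show ?case by (auto simp: mult_le_one)
qed

lemma Phi_S:
  assumes "\<forall>i\<in>set L. 0 \<le> p i \<and> p i \<le> 1"
  shows "Phi p zp a L \<le> max a t + Sf p zp t L"
  using assms
proof (induction L arbitrary: a)
  case Nil then show ?case by simp
next
  case (Cons i L)
  have p: "0 \<le> p i" "p i \<le> 1" using Cons.prems by auto
  have h1: "Phi p zp (max a (zp i)) L \<le> max a t + max (zp i - t) 0 + Sf p zp t L"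
    using Cons.IH[of "max a (zp i)"] Cons.prems by (auto simp: max_def split: if_splits)
  have h2: "Phi p zp a L \<le> max a t + Sf p zp t L" using Cons by simp
  have "p i * Phi p zp (max a (zp i)) L \<le> p i * (max a t + max (zp i - t) 0 + Sf p zp t L)"
    using h1 p by (simp add: mult_left_mono)
  moreover have "(1 - p i) * Phi p zp a L \<le> (1 - p i) * (max a t + Sf p zp t L)"
    using h2 p by (simp add: mult_left_mono)
  ultimately show ?case by (simp add: algebra_simps)
qed

lemma deleg_bound:
  fixes p x c :: "nat \<Rightarrow> real"
  assumes pr: "\<forall>i\<in>set L. 0 < p i \<and> p i \<le> 1" and t0: "0 \<le> t"
  shows "(1 - qf p x c {t..} L) * t + qf p x c {t..} L * Sf p (\<lambda>i. max (zv p x c i) 0) t L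
          \<le> deleg_val p x c {t..} L"
  using pr
proof (induction L)
  case Nil then show ?case by simp
next
  case (Cons i L)
  let ?zp = "\<lambda>i. max (zv p x c i) 0"
  have p: "0 < p i" "p i \<le> 1" using Cons.prems by auto
  have qb: "0 \<le> qf p x c {t..} L" "qf p x c {t..} L \<le> 1"
  proof -
    have "\<forall>i\<in>set L. 0 \<le> p i \<and> p i \<le> 1" using Cons.prems by auto
    then show "0 \<le> qf p x c {t..} L" "qf p x c {t..} L \<le> 1" using qf_bounds by blast+
  qed
  have IH: "(1 - qf p x c {t..} L) * t + qf p x c {t..} L * Sf p ?zp t L \<le> deleg_val p x c {t..} L"
    using Cons by simp
  show ?case
  proof (cases "zv p x c i \<in> {t..}")
    case True
    then have zt: "t \<le> zv p x c i" by simp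
    have zp: "max (?zp i - t) 0 = zv p x c i - t" using zt t0 by auto
    have pz: "- c i + p i * x i = p i * zv p x c i" using p unfolding zv_def by (simp add: field_simps)
    define q where "q = qf p x c {t..} L"
    define S where "S = Sf p ?zp t L"
    define D where "D = deleg_val p x c {t..} L"
    define z where "z = zv p x c i"
    have IH': "(1 - q) * t + q * S \<le> D" using IH unfolding q_def S_def D_def by simp
    have "(1 - p i) * ((1 - q) * t + q * S) \<le> (1 - p i) * D"
      using IH' p by (simp add: mult_left_mono)
    moreover have "0 \<le> p i * (z - t) * (1 - (1 - p i) * q)"
    proof -
      have "(1 - p i) * q \<le> 1" using p qb unfolding q_def by (simp add: mult_le_one)
      then show ?thesis using p zt unfolding z_def by simp
    qed
    ultimately have "(1 - (1 - p i) * q) * t + (1 - p i) * q * (p i * (z - t) + S)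
       \<le> p i * z + (1 - p i) * D"
      by (simp add: algebra_simps) 
    then show ?thesis using True zp pz unfolding q_def S_def D_def z_def by (simp add: algebra_simps)
  next
    case False
    then have zt: "zv p x c i < t" by simp
    have zp: "max (?zp i - t) 0 = 0" using zt t0 by auto
    show ?thesis using False zp IH by simp
  qed
qed

theorem mainTheorem1:
  fixes m :: nat and p x y c :: "nat \<Rightarrow> real" and ord :: "nat list"
  assumes p_pos: "\<forall>i<m. 0 < p i \<and> p i \<le> 1"
    and x_nonneg: "\<forall>i<m. 0 \<le> x i"
    and c_nonneg: "\<forall>i<m. 0 \<le> c i"
    and c_le: "\<forall>i<m. c i \<le> p i * y i"
    and ord_perm: "distinct ord \<and> set ord = {..<m}"
    and ord_sorted: "sorted_wrt (\<lambda>i j. wv p y c j \<le> wv p y c i) ord"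
  shows "\<exists>\<theta>::real. \<exists>X. (X = {\<theta><..} \<or> X = {\<theta>..}) \<and>
           (\<forall>t. valid_policy m t {} {} \<longrightarrow>
                 policy_val p x c t \<le> 2 * deleg_val p x c X ord)"
proof -
  let ?zp = "\<lambda>i. max (zv p x c i) 0"
  define OP where "OP = Phi p ?zp 0 ord"
  define t where "t = OP / 2"
  have pr: "\<forall>i\<in>set ord. 0 < p i \<and> p i \<le> 1" using ord_perm p_pos by auto
  have pr': "\<forall>i\<in>set ord. 0 \<le> p i \<and> p i \<le> 1" using pr by auto
  have O0: "0 \<le> OP" unfolding OP_def using Phi_ge[OF pr'] by blast
  then have t0: "0 \<le> t" unfolding t_def by simp
  have D: "(1 - qf p x c {t..} ord) * t + qf p x c {t..} ord * Sf p ?zp t ord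
          \<le> deleg_val p x c {t..} ord" by (rule deleg_bound[OF pr t0])
  have S: "OP \<le> t + Sf p ?zp t ord" using Phi_S[OF pr', of ?zp 0 t] t0 unfolding OP_def by simp
  have qb: "0 \<le> qf p x c {t..} ord" using qf_bounds[OF pr'] by blast
  have "qf p x c {t..} ord * (OP - t) \<le> qf p x c {t..} ord * Sf p ?zp t ord"
    using S qb by (simp add: mult_left_mono)
  then have key: "OP \<le> 2 * deleg_val p x c {t..} ord" using D unfolding t_def
    by (simp add: algebra_simps)
  show ?thesis
  proof (intro exI conjI allI impI)
    show "{t..} = {t<..} \<or> {t..} = {t..}" by simp
  next
    fix pol assume v: "valid_policy m pol {} {}"
    have "policy_val p x c pol \<le> OP"
      using policy_bound[OF p_pos x_nonneg c_nonneg v, of 0 ord] ord_perm unfolding OP_def by simp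
    then show "policy_val p x c pol \<le> 2 * deleg_val p x c {t..} ord" using key by simp
  qed
qed

end
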